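(* Let $n\ge2$, $(a,b)\in\Omega_n$, and $L=L^{(n)}_{(a,b)}$. Then $H_L=\langle\omega^{2ab}\rangle$, the cyclic group $C_{n/ab}$ of order $n/(ab)$, so the base group for $L$ is $G=G_{\mathcal{D}_n}(L^{(n)}_{(a,b)},C_{n/ab})$, and $$|G|=\frac{8n^2}{ab},\qquad G \text{ has } \frac{2n}{ab}+\frac{2n}{a}+\frac{2n}{b}-2 \text{ reflections}.$$ Moreover, the base groups obtained for different $(a,b)\in\Omega_n$ are all different.
   Context: $\mathbb{H}$ is the real quaternion algebra with basis $1,i,j,k$. For $n\ge2$ let $\omega:=\cos(\pi/n)+i\sin(\pi/n)\in\mathbb{H}$ and $\mathcal{D}_n:=\langle\omega,j\rangle$ (dicyclic group of order $4n$); for $r\mid 2n$, $C_r:=\langle\omega^{2n/r}\rangle$. $\Omega_n:=\{(a,b):1\le a\le b\le n,\ a\mid n,\ b\mid n,\ \gcd(a,b)=1\}$. For $x,y$ in a group put $x\circ y:=xy^{-1}x$, and let $L(X)$ be the closure of a set $X$ under $\circ$; $L^{(n)}_{(a,b)}:=L(\{1,\omega^a,j,\omega^bj\})$ (a reflection system for $\mathcal{D}_n$, i.e. a subset generating $\mathcal{D}_n$, closed under $\circ$ and containing $1$). For $b\in\mathcal{D}_n$ let $M_b=\begin{pmatrix}0&b\\ b^{-1}&0\end{pmatrix}$. For a reflection system $L$, $H_L:=\{h:\mathrm{diag}(h,1)\in\langle M_b:b\in L\rangle\}$. For $H\trianglelefteq K$ with $H\subseteq L$, $LH=L$, $G(K,L,H)$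 is the subgroup of $U(\mathbb{H}^2)$ generated by $\mathrm{diag}(h,1),\mathrm{diag}(1,h)$ ($h\in H$) and $M_b$ ($b\in L$); it is in canonical form, denoted $G_K(L,H)$, if $\{b: M_b\in G(K,L,H)\}=L$. The base group for $L$ is $G_K(L,H_L)$. A reflection is a non-identity $g\in U(\mathbb{H}^2)$ with $\operatorname{rank}(g-I)=1$. *)

theory Defs
  imports "HOL-Analysis.Analysis"
begin

datatype quat = Quat (qre: real) (qi: real) (qj: real) (qk: real)

lemma quat_eq_iff: "x = y \<longleftrightarrow> qre x = qre y \<and> qi x = qi y \<and> qj x = qj y \<and> qk x = qk y"
  by (cases x; cases y) auto

instantiation quat :: ring_1
begin
definition "0 = Quat 0 0 0 0"
definition "1 = Quat 1 0 0 0"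
definition "x + y = Quat (qre x + qre y) (qi x + qi y) (qj x + qj y) (qk x + qk y)"
definition "x - y = Quat (qre x - qre y) (qi x - qi y) (qj x - qj y) (qk x - qk y)"
definition "- x = Quat (- qre x) (- qi x) (- qj x) (- qk x)"
definition "x * y = Quat
   (qre x * qre y - qi x * qi y - qj x * qj y - qk x * qk y)
   (qre x * qi y + qi x * qre y + qj x * qk y - qk x * qj y)
   (qre x * qj y - qi x * qk y + qj x * qre y + qk x * qi y)
   (qre x * qk y + qi x * qj y - qj x * qi y + qk x * qre y)"
instance
  by standard (auto simp: quat_eq_iff zero_quat_def one_quat_def plus_quat_def minus_quat_def
      uminus_quat_def times_quat_def algebra_simps)
end

definition qnormsq :: "quat \<Rightarrow> real" where
  "qnormsq x = qre x ^ 2 + qi x ^ 2 + qj x ^ 2 + qk x ^ 2"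

definition qcnj :: "quat \<Rightarrow> quat" where
  "qcnj x = Quat (qre x) (- qi x) (- qj x) (- qk x)"

lemma qnormsq_pos: "x \<noteq> 0 \<Longrightarrow> qnormsq x > 0"
proof -
  assume "x \<noteq> 0"
  then have "qre x \<noteq> 0 \<or> qi x \<noteq> 0 \<or> qj x \<noteq> 0 \<or> qk x \<noteq> 0"
    by (auto simp: quat_eq_iff zero_quat_def)
  then show ?thesis unfolding qnormsq_def
    by (smt (verit) zero_le_power2 power2_less_0 not_sum_power2_lt_zero sum_power2_gt_zero_iff)
qed

instantiation quat :: division_ring
begin
definition inverse_quat :: "quat \<Rightarrow> quat" where "inverse_quat x = Quat (qre x / qnormsq x) (- qi x / qnormsq x) (- qj x / qnormsq x) (- qk x / qnormsq x)"
definition divide_quat :: "quat \<Rightarrow> quat \<Rightarrow> quat" where "divide_quat x y = x * inverse y"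
instance
proof
  fix a :: quat assume "a \<noteq> 0"
  then have p: "qnormsq a \<noteq> 0" using qnormsq_pos by force
  show "inverse a * a = 1" "a * inverse a = 1"
    using p by (auto simp: quat_eq_iff times_quat_def inverse_quat_def one_quat_def
        divide_simps, (simp add: qnormsq_def power2_eq_square algebra_simps)+)
next
  fix a b :: quat show "divide a b = a * inverse b" by (simp add: divide_quat_def inverse_quat_def)
next
  show "inverse (0::quat) = 0"
    by (simp add: inverse_quat_def zero_quat_def qnormsq_def)
qed
end

definition qI :: quat where "qI = Quat 0 1 0 0"
definition qJ :: quat where "qJ = Quat 0 0 1 0"

definition omega :: "nat \<Rightarrow> quat" where
  "omega n = Quat (cos (pi / real n)) (sin (pi / real n)) 0 0"

inductive_set qgen :: "quat set \<Rightarrow> quat set" for S where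
  one: "1 \<in> qgen S"
| mul: "x \<in> qgen S \<Longrightarrow> s \<in> S \<Longrightarrow> x * s \<in> qgen S"
| mulinv: "x \<in> qgen S \<Longrightarrow> s \<in> S \<Longrightarrow> x * inverse s \<in> qgen S"

definition Dic :: "nat \<Rightarrow> quat set" where
  "Dic n = qgen {omega n, qJ}"

text \<open>C_r = <omega^(2n/r)> for r dividing 2n.\<close>
definition Cyc :: "nat \<Rightarrow> nat \<Rightarrow> quat set" where
  "Cyc n r = qgen {omega n ^ (2 * n div r)}"

definition Omega :: "nat \<Rightarrow> (nat \<times> nat) set" where
  "Omega n = {(a, b). 1 \<le> a \<and> a \<le> b \<and> b \<le> n \<and> a dvd n \<and> b dvd n \<and> coprime a b}"

definition qcirc :: "quat \<Rightarrow> quat \<Rightarrow> quat" where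
  "qcirc x y = x * inverse y * x"

inductive_set Lcl :: "quat set \<Rightarrow> quat set" for X where
  base: "x \<in> X \<Longrightarrow> x \<in> Lcl X"
| circ: "x \<in> Lcl X \<Longrightarrow> y \<in> Lcl X \<Longrightarrow> qcirc x y \<in> Lcl X"

definition Lsys :: "nat \<Rightarrow> nat \<Rightarrow> nat \<Rightarrow> quat set" where
  "Lsys n a b = Lcl {1, omega n ^ a, qJ, omega n ^ b * qJ}"

type_synonym qmat = "quat ^ 2 ^ 2"

definition mat2 :: "quat \<Rightarrow> quat \<Rightarrow> quat \<Rightarrow> quat \<Rightarrow> qmat" where
  "mat2 p q r s = vector [vector [p, q], vector [r, s]]"

definition Mb :: "quat \<Rightarrow> qmat" where
  "Mb b = mat2 0 b (inverse b) 0"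

definition qdiag :: "quat \<Rightarrow> quat \<Rightarrow> qmat" where
  "qdiag h k = mat2 h 0 0 k"

text \<open>Conjugate transpose; on U(H^2) this is the group inverse.\<close>
definition qadj :: "qmat \<Rightarrow> qmat" where
  "qadj A = (\<chi> i j. qcnj (A $ j $ i))"

definition unitary :: "qmat \<Rightarrow> bool" where
  "unitary A \<longleftrightarrow> qadj A ** A = mat 1 \<and> A ** qadj A = mat 1"

text \<open>Subgroup of U(H^2) generated by a set S of unitary matrices
  (the inverse of a unitary matrix is its conjugate transpose).\<close>
inductive_set mgen :: "qmat set \<Rightarrow> qmat set" for S where
  one: "mat 1 \<in> mgen S"
| mul: "g \<in> mgen S \<Longrightarrow> s \<in> S \<Longrightarrow> g ** s \<in> mgen S"
| mulinv: "g \<in> mgen S \<Longrightarrow> s \<in> S \<Longrightarrow> g ** qadj s \<in> mgen S"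

definition HL :: "quat set \<Rightarrow> quat set" where
  "HL L = {h. qdiag h 1 \<in> mgen (Mb ` L)}"

text \<open>G(K,L,H) (the group does not depend on K)\<close>
definition Ggrp :: "quat set \<Rightarrow> quat set \<Rightarrow> qmat set" where
  "Ggrp L H = mgen ((\<lambda>h. qdiag h 1) ` H \<union> (\<lambda>h. qdiag 1 h) ` H \<union> Mb ` L)"

definition canonical :: "quat set \<Rightarrow> quat set \<Rightarrow> bool" where
  "canonical L H \<longleftrightarrow> {b. Mb b \<in> Ggrp L H} = L"

definition base_group :: "quat set \<Rightarrow> qmat set" where
  "base_group L = Ggrp L (HL L)"

text \<open>Rank of a 2x2 quaternionic matrix (H^2 as a right H-module): the maximal number
  of right-linearly independent columns.\<close>
definition qrank :: "qmat \<Rightarrow> nat" where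
  "qrank A = (if A = 0 then 0
              else if (\<exists>v :: quat ^ 2. v \<noteq> 0 \<and> A *v v = 0) then 1 else 2)"

definition is_reflection :: "qmat \<Rightarrow> bool" where
  "is_reflection g \<longleftrightarrow> unitary g \<and> g \<noteq> mat 1 \<and> qrank (g - mat 1) = 1"

end

theory Submission
  imports Defs
begin


definition ad :: "quat \<Rightarrow> quat \<Rightarrow> qmat" where "ad p q = mat2 0 p q 0"

lemma mat2_eq: "mat2 p q r s = mat2 p2 q2 r2 s2 \<longleftrightarrow> p = p2 \<and> q = q2 \<and> r = r2 \<and> s = s2"
  by (auto simp: mat2_def vec_eq_iff forall_2)

lemma mat2_nth: "mat2 p q r s $ 1 $ 1 = p" "mat2 p q r s $ 1 $ 2 = q"
   "mat2 p q r s $ 2 $ 1 = r" "mat2 p q r s $ 2 $ 2 = s"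
  by (auto simp: mat2_def)

lemma mat2_mult: "mat2 p q r s ** mat2 p2 q2 r2 s2 =
   mat2 (p * p2 + q * r2) (p * q2 + q * s2) (r * p2 + s * r2) (r * q2 + s * s2)"
  by (simp add: vec_eq_iff forall_2 matrix_matrix_mult_def sum_2 mat2_nth)

lemma mat1_eq: "(mat 1 :: qmat) = mat2 1 0 0 1"
  by (simp add: vec_eq_iff forall_2 mat_def mat2_nth)

lemma mat2_adj: "qadj (mat2 p q r s) = mat2 (qcnj p) (qcnj r) (qcnj q) (qcnj s)"
  by (simp add: vec_eq_iff forall_2 qadj_def mat2_nth)

lemma mat2_minus: "mat2 p q r s - mat2 p2 q2 r2 s2 = mat2 (p-p2) (q-q2) (r-r2) (s-s2)"
  by (simp add: vec_eq_iff forall_2 mat2_nth)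

lemma mat2_zero: "mat2 p q r s = 0 \<longleftrightarrow> p = 0 \<and> q = 0 \<and> r = 0 \<and> s = 0"
  by (auto simp: vec_eq_iff forall_2 mat2_nth)

lemma mat2_mulv: "mat2 p q r s *v v = vector [p * v$1 + q * v$2, r * v$1 + s * v$2]"
  by (simp add: vec_eq_iff forall_2 matrix_vector_mult_def sum_2 mat2_nth)

lemma vec2_zero: "(v :: quat^2) = 0 \<longleftrightarrow> v$1 = 0 \<and> v$2 = 0"
  by (auto simp: vec_eq_iff forall_2)

lemma dg_mult: "qdiag p q ** qdiag p2 q2 = qdiag (p * p2) (q * q2)"
  and dg_ad: "qdiag p q ** ad p2 q2 = ad (p * p2) (q * q2)"
  and ad_dg: "ad p q ** qdiag p2 q2 = ad (p * q2) (q * p2)"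
  and ad_ad: "ad p q ** ad p2 q2 = qdiag (p * q2) (q * p2)"
  by (simp_all add: qdiag_def ad_def mat2_mult)

lemma dg_adj: "qadj (qdiag p q) = qdiag (qcnj p) (qcnj q)"
  and ad_adj: "qadj (ad p q) = ad (qcnj q) (qcnj p)"
  by (simp_all add: qdiag_def ad_def mat2_adj qcnj_def zero_quat_def)

lemma dg_ad_neq: "qdiag p q \<noteq> ad p2 q2 \<or> (p = 0 \<and> q = 0 \<and> p2 = 0 \<and> q2 = 0)"
  by (auto simp: qdiag_def ad_def mat2_eq)



definition Wq :: "nat \<Rightarrow> int \<Rightarrow> quat" where
  "Wq n u = Quat (cos (of_int u * pi / real n)) (sin (of_int u * pi / real n)) 0 0"

definition Dq :: "nat \<Rightarrow> int \<Rightarrow> bool \<Rightarrow> quat" where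
  "Dq n u e = (if e then Wq n u * qJ else Wq n u)"

lemma Wq_mult: "Wq n u * Wq n v = Wq n (u + v)"
proof -
  have e: "of_int (u + v) * pi / real n = of_int u * pi / real n + of_int v * pi / real n"
    by (simp add: add_divide_distrib distrib_right)
  show ?thesis unfolding Wq_def e
    by (simp add: times_quat_def cos_add sin_add algebra_simps)
qed

lemma Wq_0: "Wq n 0 = 1"
  by (simp add: Wq_def one_quat_def)

lemma Wq_one: assumes "n > 0" shows "Wq n u = 1 \<longleftrightarrow> 2 * int n dvd u"
proof
  assume "Wq n u = 1"
  then have c: "cos (of_int u * pi / real n) = 1" by (simp add: Wq_def one_quat_def)
  then obtain k :: int where k: "of_int u * pi / real n = of_int k * 2 * pi"
    using cos_one_2pi_int by blast
  then have "real_of_int u = real_of_int (k * 2 * int n)" using assms by (simp add: field_simps)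
  then have "u = k * 2 * int n" by linarith
  then show "2 * int n dvd u" by simp
next
  assume "2 * int n dvd u"
  then obtain k where k: "u = 2 * int n * k" by blast
  have "of_int u * pi / real n = (2 * pi) * of_int k" using assms unfolding k by (simp add: field_simps)
  then show "Wq n u = 1" unfolding Wq_def one_quat_def
    by (simp add: cos_int_2pin sin_int_2pin)
qed

lemma Wq_eq: assumes "n > 0" shows "Wq n u = Wq n v \<longleftrightarrow> 2 * int n dvd (u - v)"
proof -
  have "Wq n u = Wq n v \<longleftrightarrow> Wq n u * Wq n (-v) = Wq n v * Wq n (-v)"
  proof
    assume "Wq n u * Wq n (- v) = Wq n v * Wq n (- v)"
    then have "Wq n u * Wq n (- v) * Wq n v = Wq n v * Wq n (- v) * Wq n v" by simp
    then show "Wq n u = Wq n v" by (simp add: mult.assoc Wq_mult Wq_0)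
  qed simp
  also have "\<dots> \<longleftrightarrow> Wq n (u - v) = 1" by (simp add: Wq_mult Wq_0)
  finally show ?thesis using Wq_one[OF assms] by simp
qed

lemma Wq_n: assumes "n > 0" shows "Wq n (int n) = - 1"
  using assms by (simp add: Wq_def one_quat_def uminus_quat_def)

lemma J_Wq: "qJ * Wq n u = Wq n (- u) * qJ"
  by (simp add: Wq_def qJ_def times_quat_def)

lemma JJ: "qJ * qJ = - 1"
  by (simp add: qJ_def times_quat_def one_quat_def uminus_quat_def)

lemma omega_pow: "omega n ^ m = Wq n (int m)"
proof (induction m)
  case 0 then show ?case by (simp add: Wq_0)
next
  case (Suc m)
  have "omega n = Wq n 1" by (simp add: omega_def Wq_def)
  then show ?case using Suc by (simp add: Wq_mult mult.commute)
qed

lemma WJ_neq: "Wq n u * qJ \<noteq> Wq n v"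
proof
  assume "Wq n u * qJ = Wq n v"
  then have "cos (of_int u * pi / real n) = 0" "sin (of_int u * pi / real n) = 0"
    by (auto simp: Wq_def qJ_def times_quat_def)
  then show False using sin_cos_squared_add[of "of_int u * pi / real n"] by simp
qed

lemma Wq_nz: "Wq n u \<noteq> 0"
proof
  assume "Wq n u = 0"
  then have "cos (of_int u * pi / real n) = 0" "sin (of_int u * pi / real n) = 0"
    by (auto simp: Wq_def zero_quat_def)
  then show False using sin_cos_squared_add[of "of_int u * pi / real n"] by simp
qed

lemma J_nz: "qJ \<noteq> 0" by (simp add: qJ_def zero_quat_def)

lemma Dq_nz: "Dq n u e \<noteq> 0"
  by (simp add: Dq_def Wq_nz J_nz)

lemma Dq_mult: assumes "n > 0" shows
  "Dq n u e * Dq n v f = Dq n (if e then u - v + (if f then int n else 0) else u + v) (e \<noteq> f)"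
proof -
  have "Wq n u * qJ * Wq n v = Wq n (u - v) * qJ"
    by (simp add: mult.assoc J_Wq) (simp add: mult.assoc[symmetric] Wq_mult)
  moreover have "Wq n u * qJ * (Wq n v * qJ) = Wq n (u - v + int n)"
  proof -
    have "Wq n u * qJ * (Wq n v * qJ) = Wq n u * (qJ * Wq n v) * qJ" by (simp add: mult.assoc)
    also have "\<dots> = Wq n (u - v) * (qJ * qJ)" by (simp add: J_Wq mult.assoc[symmetric] Wq_mult)
    also have "\<dots> = Wq n (u - v + int n)" by (simp add: JJ Wq_n[OF assms, symmetric] Wq_mult)
    finally show ?thesis .
  qed
  moreover have "Wq n u * (Wq n v * qJ) = Wq n (u + v) * qJ"
    by (simp add: mult.assoc[symmetric] Wq_mult)
  moreover have "Wq n u * qJ * Wq n v = Wq n (u - v) * qJ"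
    by (simp add: mult.assoc J_Wq) (simp add: mult.assoc[symmetric] Wq_mult)
  ultimately show ?thesis by (cases e; cases f) (simp_all add: Dq_def Wq_mult)
qed

lemma Dq_eq: assumes "n > 0" shows "Dq n u e = Dq n v f \<longleftrightarrow> e = f \<and> 2 * int n dvd (u - v)"
proof (cases e; cases f)
  assume "e" "f"
  then show ?thesis by (simp add: Dq_def J_nz Wq_eq[OF assms])
next
  assume "e" "\<not> f" then show ?thesis by (simp add: Dq_def WJ_neq)
next
  assume "\<not> e" "f" then show ?thesis by (simp add: Dq_def WJ_neq[symmetric])
next
  assume "\<not> e" "\<not> f" then show ?thesis by (simp add: Dq_def Wq_eq[OF assms])
qed

lemma Dq_inv: assumes "n > 0" shows "inverse (Dq n u e) = Dq n (if e then u + int n else - u) e"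
  apply (rule inverse_unique)
  apply (simp add: Dq_mult[OF assms])
  apply (simp add: Dq_def Wq_0)
  done

lemma Dq_cnj: assumes "n > 0" shows "qcnj (Dq n u e) = Dq n (if e then u + int n else - u) e"
proof -
  have "cos ((of_int u + real n) * pi / real n) = - cos (of_int u * pi / real n)"
       "sin ((of_int u + real n) * pi / real n) = - sin (of_int u * pi / real n)"
    using assms by (simp_all add: distrib_right add_divide_distrib cos_add sin_add)
  then show ?thesis
    by (simp add: Dq_def qcnj_def Wq_def qJ_def times_quat_def)
qed

lemma Dq_cnj_inv: assumes "n > 0" shows "qcnj (Dq n u e) = inverse (Dq n u e)"
  using Dq_cnj[OF assms] Dq_inv[OF assms] by simp



definition en :: "nat \<Rightarrow> bool \<Rightarrow> int" where "en n e = (if e then int n else 0)"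

definition SigS :: "nat \<Rightarrow> nat \<Rightarrow> nat \<Rightarrow> (quat \<times> quat) set" where
  "SigS n a b = {(Dq n u e, Dq n v e) | u v e.
     2 * int b dvd u + v - en n e \<and> 2 * int a dvd u - v - en n e}"

definition GsS :: "nat \<Rightarrow> nat \<Rightarrow> nat \<Rightarrow> qmat set" where
  "GsS n a b = (\<lambda>(p, q). qdiag p q) ` SigS n a b \<union> (\<lambda>(p, q). ad p q) ` SigS n a b"

definition LsS :: "nat \<Rightarrow> nat \<Rightarrow> nat \<Rightarrow> quat set" where
  "LsS n a b = {Dq n (k * int a) False | k. True} \<union> {Dq n (k * int b) True | k. True}"

definition HsS :: "nat \<Rightarrow> nat \<Rightarrow> nat \<Rightarrow> quat set" where
  "HsS n a b = {Wq n (2 * int a * int b * k) | k. True}"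

lemma SigI: "2 * int b dvd u + v - en n e \<Longrightarrow> 2 * int a dvd u - v - en n e \<Longrightarrow> (Dq n u e, Dq n v e) \<in> SigS n a b"
  unfolding SigS_def by blast

lemma lin: "(d::int) dvd y \<Longrightarrow> d dvd z \<Longrightarrow> d dvd N \<Longrightarrow> w = r * y + s * z + t * N \<Longrightarrow> d dvd w"
  by simp

lemma mgen_mult: assumes "h \<in> mgen S" shows "g \<in> mgen S \<Longrightarrow> g ** h \<in> mgen S"
  using assms
proof (induction h rule: mgen.induct)
  case one then show ?case by simp
next
  case (mul h s) then show ?case using mgen.mul[of "g ** h" S s] by (simp add: matrix_mul_assoc)
next
  case (mulinv h s) then show ?case using mgen.mulinv[of "g ** h" S s] by (simp add: matrix_mul_assoc)
qed

lemma mgen_base: "s \<in> S \<Longrightarrow> s \<in> mgen S"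
  using mgen.mul[OF mgen.one, of s S] by simp

lemma mgen_mono: assumes "S \<subseteq> T" shows "mgen S \<subseteq> mgen T"
proof
  fix g assume "g \<in> mgen S" then show "g \<in> mgen T"
    by induction (use assms in \<open>auto intro: mgen.intros\<close>)
qed

lemma mgen_sub: assumes "mat 1 \<in> G" "\<And>g s. g \<in> G \<Longrightarrow> s \<in> S \<Longrightarrow> g ** s \<in> G"
  "\<And>g s. g \<in> G \<Longrightarrow> s \<in> S \<Longrightarrow> g ** qadj s \<in> G" shows "mgen S \<subseteq> G"
proof
  fix g assume "g \<in> mgen S" then show "g \<in> G"
    by induction (use assms in auto)
qed

locale ctx = fixes n a b :: nat
  assumes n0: "0 < n" and a0: "0 < a" and b0: "0 < b" and adv: "a dvd n" and bdv: "b dvd n"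
    and cop: "coprime a b"
begin

abbreviation "Sig \<equiv> SigS n a b"
abbreviation "Gs \<equiv> GsS n a b"
abbreviation "Ls \<equiv> LsS n a b"
abbreviation "Hs \<equiv> HsS n a b"

lemma a2n: "2 * int a dvd 2 * int n" using adv by simp
lemma b2n: "2 * int b dvd 2 * int n" using bdv by simp

lemma Sig_mult: assumes "(p, q) \<in> Sig" "(p2, q2) \<in> Sig" shows "(p * p2, q * q2) \<in> Sig"
proof -
  obtain u v e where 1: "p = Dq n u e" "q = Dq n v e" "2 * int b dvd u + v - en n e" "2 * int a dvd u - v - en n e"
    using assms(1) unfolding SigS_def by blast
  obtain u2 v2 e2 where 2: "p2 = Dq n u2 e2" "q2 = Dq n v2 e2" "2 * int b dvd u2 + v2 - en n e2" "2 * int a dvd u2 - v2 - en n e2"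
    using assms(2) unfolding SigS_def by blast
  define U where "U = (if e then u - u2 + (if e2 then int n else 0) else u + u2)"
  define V where "V = (if e then v - v2 + (if e2 then int n else 0) else v + v2)"
  have "p * p2 = Dq n U (e \<noteq> e2)" "q * q2 = Dq n V (e \<noteq> e2)"
    unfolding 1 2 U_def V_def by (simp_all add: Dq_mult[OF n0])
  moreover have "2 * int b dvd U + V - en n (e \<noteq> e2)"
    by (rule lin[OF 1(3) 2(3) b2n, where r=1 and s="if e then -1 else 1" and t="if e \<and> e2 then 1 else 0"])
      (auto simp: U_def V_def en_def)
  moreover have "2 * int a dvd U - V - en n (e \<noteq> e2)"
    by (rule lin[OF 1(4) 2(4) a2n, where r=1 and s="if e then -1 else 1" and t=0])
      (auto simp: U_def V_def en_def)
  ultimately show ?thesis unfolding SigS_def by blast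
qed

lemma Sig_swap: assumes "(p, q) \<in> Sig" shows "(q, p) \<in> Sig"
proof -
  obtain u v e where 1: "p = Dq n u e" "q = Dq n v e" "2 * int b dvd u + v - en n e" "2 * int a dvd u - v - en n e"
    using assms(1) unfolding SigS_def by blast
  have "2 * int b dvd v + u - en n e" using 1(3) by (simp add: algebra_simps)
  moreover have "2 * int a dvd v - u - en n e"
    by (rule lin[OF 1(4) 1(4) a2n, where r="-1" and s=0 and t="if e then -1 else 0"])
      (auto simp: en_def)
  ultimately show ?thesis unfolding SigS_def 1 by blast
qed

lemma Sig_inv: assumes "(p, q) \<in> Sig" shows "(inverse p, inverse q) \<in> Sig"
proof -
  obtain u v e where 1: "p = Dq n u e" "q = Dq n v e" "2 * int b dvd u + v - en n e" "2 * int a dvd u - v - en n e"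
    using assms(1) unfolding SigS_def by blast
  define U where "U = (if e then u + int n else - u)"
  define V where "V = (if e then v + int n else - v)"
  have "inverse p = Dq n U e" "inverse q = Dq n V e"
    unfolding 1 U_def V_def by (simp_all add: Dq_inv[OF n0])
  moreover have "2 * int b dvd U + V - en n e"
    by (rule lin[OF 1(3) 1(3) b2n, where r="if e then 1 else -1" and s=0 and t="if e then 1 else 0"])
      (auto simp: U_def V_def en_def)
  moreover have "2 * int a dvd U - V - en n e"
    by (rule lin[OF 1(4) 1(4) a2n, where r="if e then 1 else -1" and s=0 and t=0])
      (auto simp: U_def V_def en_def)
  ultimately show ?thesis unfolding SigS_def by blast
qed

lemma Sig_cnj: assumes "(p, q) \<in> Sig" shows "qcnj p = inverse p" "qcnj q = inverse q"
  using assms unfolding SigS_def by (auto simp: Dq_cnj_inv[OF n0])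

lemma Sig_nz: assumes "(p, q) \<in> Sig" shows "p \<noteq> 0" "q \<noteq> 0"
  using assms unfolding SigS_def by (auto simp: Dq_nz)

lemma Sig_one: "(1, 1) \<in> Sig"
proof -
  have "(Dq n 0 False, Dq n 0 False) \<in> Sig" by (rule SigI) (auto simp: en_def)
  then show ?thesis by (simp add: Dq_def Wq_0)
qed

lemma Gs_mult: assumes "g \<in> Gs" "h \<in> Gs" shows "g ** h \<in> Gs"
proof -
  from assms(1) obtain p q where g: "(p, q) \<in> Sig" "g = qdiag p q \<or> g = ad p q"
    unfolding GsS_def by auto
  from assms(2) obtain p2 q2 where h: "(p2, q2) \<in> Sig" "h = qdiag p2 q2 \<or> h = ad p2 q2"
    unfolding GsS_def by auto
  have s1: "(p * p2, q * q2) \<in> Sig" by (rule Sig_mult[OF g(1) h(1)])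
  have s2: "(p * q2, q * p2) \<in> Sig" by (rule Sig_mult[OF g(1) Sig_swap[OF h(1)]])
  show ?thesis using g(2) h(2) s1 s2 unfolding GsS_def
    by (auto simp: dg_mult dg_ad ad_dg ad_ad)
qed

lemma Gs_adj: assumes "g \<in> Gs" shows "qadj g \<in> Gs"
proof -
  from assms(1) obtain p q where g: "(p, q) \<in> Sig" "g = qdiag p q \<or> g = ad p q"
    unfolding GsS_def by auto
  have "(inverse p, inverse q) \<in> Sig" "(inverse q, inverse p) \<in> Sig"
    using Sig_inv[OF g(1)] Sig_swap[OF Sig_inv[OF g(1)]] by auto
  then show ?thesis using g(2) Sig_cnj[OF g(1)] unfolding GsS_def
    by (auto simp: dg_adj ad_adj)
qed

lemma Gs_one: "mat 1 \<in> Gs"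
  using Sig_one unfolding GsS_def by (force simp: mat1_eq qdiag_def)

lemma mgen_Gs: "S \<subseteq> Gs \<Longrightarrow> mgen S \<subseteq> Gs"
  by (rule mgen_sub) (auto intro: Gs_one Gs_mult Gs_adj)

end


lemma qcirc_Dq: assumes "n > 0" shows
  "qcirc (Dq n s e) (Dq n t f) = Dq n (if e = f then 2 * s - t else t + int n) f"
  unfolding qcirc_def
  by (cases e; cases f) (simp_all add: Dq_inv[OF assms] Dq_mult[OF assms] algebra_simps)

lemma Dq_False: "Dq n u False = Wq n u" by (simp add: Dq_def)

context ctx begin

lemma LsI1: "Dq n (k * int a) False \<in> Ls" unfolding LsS_def by blast
lemma LsI2: "Dq n (k * int b) True \<in> Ls" unfolding LsS_def by blast

lemma LsE: assumes "x \<in> Ls"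
  obtains k where "x = Dq n (k * int a) False" | k where "x = Dq n (k * int b) True"
  using assms unfolding LsS_def by blast

lemma nA: obtains A where "n = a * A" "A > 0" using adv n0 by (metis dvd_def gr0I mult_0_right)
lemma nB: obtains B where "n = b * B" "B > 0" using bdv n0 by (metis dvd_def gr0I mult_0_right)

lemma Dq_period: assumes "n = c * C" shows "Dq n (k * int c) e = Dq n ((k mod (2 * int C)) * int c) e"
proof -
  have "k - k mod (2 * int C) = 2 * int C * (k div (2 * int C))" by (simp add: minus_mod_eq_mult_div)
  then have "k * int c - (k mod (2 * int C)) * int c = 2 * int C * (k div (2 * int C)) * int c"
    by (metis left_diff_distrib)
  also have "\<dots> = (k div (2 * int C)) * (2 * int n)" using assms by (simp add: algebra_simps)
  finally have "k * int c - (k mod (2 * int C)) * int c = (k div (2 * int C)) * (2 * int n)" .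
  then show ?thesis by (simp add: Dq_eq[OF n0])
qed

lemma Lsys_eq: "Lsys n a b = Ls"
proof
  show "Lsys n a b \<subseteq> Ls"
  proof
    fix x assume "x \<in> Lsys n a b"
    then show "x \<in> Ls" unfolding Lsys_def
    proof induction
      case (base x)
      have "1 \<in> Ls" using LsI1[of 0] by (simp add: Dq_def Wq_0)
      moreover have "omega n ^ a \<in> Ls" using LsI1[of 1] by (simp add: Dq_def omega_pow)
      moreover have "qJ \<in> Ls" using LsI2[of 0] by (simp add: Dq_def Wq_0)
      moreover have "omega n ^ b * qJ \<in> Ls" using LsI2[of 1] by (simp add: Dq_def omega_pow)
      ultimately show ?case using base by auto
    next
      case (circ x y)
      obtain A where A: "n = a * A" "A > 0" by (rule nA)
      obtain B where B: "n = b * B" "B > 0" by (rule nB)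
      from circ(3) show ?case
      proof (cases rule: LsE)
        case (1 k)
        note x = this
        from circ(4) show ?thesis
        proof (cases rule: LsE)
          case (1 l)
          have "qcirc x y = Dq n ((2 * k - l) * int a) False"
            unfolding x 1 qcirc_Dq[OF n0] by (simp add: algebra_simps)
          then show ?thesis using LsI1 by simp
        next
          case (2 l)
          have "qcirc x y = Dq n ((l + int B) * int b) True"
            unfolding x 2 qcirc_Dq[OF n0] using B by (simp add: algebra_simps)
          then show ?thesis using LsI2 by simp
        qed
      next
        case (2 k)
        note x = this
        from circ(4) show ?thesis
        proof (cases rule: LsE)
          case (1 l)
          have "qcirc x y = Dq n ((l + int A) * int a) False"
            unfolding x 1 qcirc_Dq[OF n0] using A by (simp add: algebra_simps)
          then show ?thesis using LsI1 by simp
        next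
          case (2 l)
          have "qcirc x y = Dq n ((2 * k - l) * int b) True"
            unfolding x 2 qcirc_Dq[OF n0] by (simp add: algebra_simps)
          then show ?thesis using LsI2 by simp
        qed
      qed
    qed
  qed
next
  let ?X = "{1, omega n ^ a, qJ, omega n ^ b * qJ}"
  have pa: "Dq n (int m * int a) False \<in> Lsys n a b \<and> Dq n ((int m + 1) * int a) False \<in> Lsys n a b" for m
  proof (induction m)
    case 0
    have "1 = Dq n (0 * int a) False" by (simp add: Dq_def Wq_0)
    moreover have "omega n ^ a = Dq n (1 * int a) False" by (simp add: Dq_def omega_pow)
    ultimately show ?case unfolding Lsys_def by (auto intro: Lcl.base)
  next
    case (Suc m)
    have "qcirc (Dq n ((int m + 1) * int a) False) (Dq n (int m * int a) False) = Dq n ((int m + 2) * int a) False"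
      unfolding qcirc_Dq[OF n0] by (simp add: algebra_simps)
    then have c: "Dq n ((int m + 2) * int a) False \<in> Lsys n a b"
      using Suc Lcl.circ[of _ ?X] unfolding Lsys_def by metis
    have "int (Suc m) = int m + 1" "int (Suc m) + 1 = int m + 2" by simp_all
    then show ?case using Suc c by presburger
  qed
  have pb: "Dq n (int m * int b) True \<in> Lsys n a b \<and> Dq n ((int m + 1) * int b) True \<in> Lsys n a b" for m
  proof (induction m)
    case 0
    have "qJ = Dq n (0 * int b) True" by (simp add: Dq_def Wq_0)
    moreover have "omega n ^ b * qJ = Dq n (1 * int b) True" by (simp add: Dq_def omega_pow)
    ultimately show ?case unfolding Lsys_def by (auto intro: Lcl.base)
  next
    case (Suc m)
    have "qcirc (Dq n ((int m + 1) * int b) True) (Dq n (int m * int b) True) = Dq n ((int m + 2) * int b) True"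
      unfolding qcirc_Dq[OF n0] by (simp add: algebra_simps)
    then have c: "Dq n ((int m + 2) * int b) True \<in> Lsys n a b"
      using Suc Lcl.circ[of _ ?X] unfolding Lsys_def by metis
    have "int (Suc m) = int m + 1" "int (Suc m) + 1 = int m + 2" by simp_all
    then show ?case using Suc c by presburger
  qed
  show "Ls \<subseteq> Lsys n a b"
  proof
    fix x assume "x \<in> Ls"
    then show "x \<in> Lsys n a b"
    proof (cases rule: LsE)
      case (1 k)
      obtain A where A: "n = a * A" "A > 0" by (rule nA)
      have "x = Dq n (int (nat (k mod (2 * int A))) * int a) False"
        using 1 Dq_period[OF A(1)] A(2) by simp
      then show ?thesis using pa by blast
    next
      case (2 k)
      obtain B where B: "n = b * B" "B > 0" by (rule nB)
      have "x = Dq n (int (nat (k mod (2 * int B))) * int b) True"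
        using 2 Dq_period[OF B(1)] B(2) by simp
      then show ?thesis using pb by blast
    qed
  qed
qed

end


lemma Mb_ad: "Mb c = ad c (inverse c)" by (simp add: Mb_def ad_def)

context ctx begin

lemma GsI1: "(p, q) \<in> Sig \<Longrightarrow> qdiag p q \<in> Gs" unfolding GsS_def by force
lemma GsI2: "(p, q) \<in> Sig \<Longrightarrow> ad p q \<in> Gs" unfolding GsS_def by force

lemma Mb_Ls: assumes "c \<in> Ls" shows "Mb c \<in> Gs"
  using assms
proof (cases rule: LsE)
  case (1 k)
  have "(Dq n (k * int a) False, Dq n (- (k * int a)) False) \<in> Sig"
    by (rule SigI) (auto simp: en_def)
  then show ?thesis using 1 by (simp add: Mb_ad Dq_inv[OF n0] GsI2)
next
  case (2 k)
  have "2 * int a dvd - (2 * int n)" using a2n by simp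
  then have "(Dq n (k * int b) True, Dq n (k * int b + int n) True) \<in> Sig"
    by (intro SigI) (auto simp: en_def)
  then show ?thesis using 2 by (simp add: Mb_ad Dq_inv[OF n0] GsI2)
qed

abbreviation "M \<equiv> mgen (Mb ` Ls)"

lemma Wq_inv: "inverse (Wq n u) = Wq n (- u)"
  using Dq_inv[OF n0, of u False] by (simp add: Dq_False)

lemma one_Ls: "1 \<in> Ls" using LsI1[of 0] by (simp add: Dq_def Wq_0)
lemma J_Ls: "Dq n 0 True \<in> Ls" using LsI2[of 0] by simp

lemma M1: "ad 1 1 \<in> M"
proof -
  have "Mb 1 \<in> M" using one_Ls by (intro mgen_base imageI)
  then show ?thesis by (simp add: Mb_ad)
qed

lemma Ta: "qdiag (Wq n (int a)) (Wq n (- int a)) \<in> M"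
proof -
  have "Mb (Dq n (1 * int a) False) \<in> M" by (intro mgen_base imageI LsI1)
  then have "Mb (Dq n (1 * int a) False) ** ad 1 1 \<in> M" using M1 mgen_mult by blast
  then show ?thesis by (simp add: Mb_ad Dq_inv[OF n0] ad_ad Dq_def Wq_inv)
qed

lemma Tb: "qdiag (Wq n (int b)) (Wq n (int b)) \<in> M"
proof -
  have "Mb (Dq n (1 * int b) True) \<in> M" by (intro mgen_base imageI LsI2)
  moreover have "Mb (Dq n 0 True) \<in> M" using J_Ls by (intro mgen_base imageI)
  ultimately have "Mb (Dq n (1 * int b) True) ** Mb (Dq n 0 True) \<in> M" using mgen_mult by blast
  moreover have "Wq n (int b + int n + int n) = Wq n (int b)" by (simp add: Wq_eq[OF n0])
  ultimately show ?thesis by (simp add: Mb_ad Dq_inv[OF n0] ad_ad Dq_mult[OF n0] Dq_False)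
qed

lemma Tj: "qdiag (Dq n (int n) True) (Dq n 0 True) \<in> M"
proof -
  have "Mb (Dq n 0 True) \<in> M" using J_Ls by (intro mgen_base imageI)
  then have "ad 1 1 ** Mb (Dq n 0 True) \<in> M" using M1 mgen_mult by blast
  then show ?thesis by (simp add: Mb_ad Dq_inv[OF n0] ad_ad)
qed

lemma Tpow: assumes "qdiag (Wq n c) (Wq n d) \<in> M" shows "qdiag (Wq n (int m * c)) (Wq n (int m * d)) \<in> M"
proof (induction m)
  case 0 then show ?case using mgen.one[of "Mb ` Ls"] by (simp add: Wq_0 mat1_eq qdiag_def)
next
  case (Suc m)
  then have "qdiag (Wq n (int m * c)) (Wq n (int m * d)) ** qdiag (Wq n c) (Wq n d) \<in> M"
    using assms mgen_mult by blast
  then show ?case by (simp add: dg_mult Wq_mult algebra_simps)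
qed

lemma Txy: "qdiag (Wq n (x * int a + y * int b)) (Wq n (y * int b - x * int a)) \<in> M"
proof -
  obtain A where A: "n = a * A" "A > 0" by (rule nA)
  obtain B where B: "n = b * B" "B > 0" by (rule nB)
  define x' where "x' = nat (x mod (2 * int A))"
  define y' where "y' = nat (y mod (2 * int B))"
  have ex: "Wq n (x * int a) = Wq n (int x' * int a)"
    using Dq_period[OF A(1), of x False] A(2) by (simp add: Dq_False x'_def)
  have ex2: "Wq n (- (x * int a)) = Wq n (- (int x' * int a))"
    using Dq_period[OF A(1), of "- x" False] Dq_period[OF A(1), of x False] A(2)
    by (simp add: Dq_False x'_def Wq_eq[OF n0]) (metis dvd_minus_iff minus_diff_eq)
  have ey: "Wq n (y * int b) = Wq n (int y' * int b)"
    using Dq_period[OF B(1), of y False] B(2) by (simp add: Dq_False y'_def)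
  have "qdiag (Wq n (int x' * int a)) (Wq n (int x' * (- int a))) ** qdiag (Wq n (int y' * int b)) (Wq n (int y' * int b)) \<in> M"
    using Tpow[OF Ta] Tpow[OF Tb] mgen_mult by blast
  then have "qdiag (Wq n (int x' * int a) * Wq n (int y' * int b)) (Wq n (- (int x' * int a)) * Wq n (int y' * int b)) \<in> M"
    by (simp add: dg_mult)
  then have "qdiag (Wq n (x * int a) * Wq n (y * int b)) (Wq n (- (x * int a)) * Wq n (y * int b)) \<in> M"
    by (simp only: ex ex2 ey)
  then show ?thesis by (simp add: Wq_mult)
qed

lemma Sig_param: assumes "(p, q) \<in> Sig"
  obtains x y e where "p = Dq n (x * int a + y * int b + en n e) e" "q = Dq n (y * int b - x * int a) e"
proof -
  obtain u v e where 1: "p = Dq n u e" "q = Dq n v e" "2 * int b dvd u + v - en n e" "2 * int a dvd u - v - en n e"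
    using assms(1) unfolding SigS_def by blast
  obtain y where y: "u + v - en n e = 2 * int b * y" using 1(3) by blast
  obtain x where x: "u - v - en n e = 2 * int a * x" using 1(4) by blast
  have "u = x * int a + y * int b + en n e" "v = y * int b - x * int a" using x y by (simp_all add: algebra_simps)
  then show ?thesis using that 1 by blast
qed

lemma Gs_M: "Gs \<subseteq> M"
proof
  fix g assume "g \<in> Gs"
  then obtain p q where g: "(p, q) \<in> Sig" "g = qdiag p q \<or> g = ad p q"
    unfolding GsS_def by auto
  obtain x y e where p: "p = Dq n (x * int a + y * int b + en n e) e" "q = Dq n (y * int b - x * int a) e"
    using Sig_param[OF g(1)] by blast
  have d: "qdiag p q \<in> M"
  proof (cases e)
    case True
    have "qdiag (Wq n (x * int a + y * int b)) (Wq n (y * int b - x * int a)) ** qdiag (Dq n (int n) True) (Dq n 0 True) \<in> M"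
      using Txy Tj mgen_mult by blast
    then show ?thesis using True p by (simp add: dg_mult Dq_mult[OF n0] flip: Dq_False add: en_def)
  next
    case False
    then show ?thesis using p Txy by (simp add: Dq_False en_def)
  qed
  moreover have "qdiag p q ** ad 1 1 \<in> M" using d M1 mgen_mult by blast
  ultimately show "g \<in> M" using g(2) by (auto simp: dg_ad)
qed

lemma M_eq: "M = Gs"
  using Gs_M mgen_Gs[of "Mb ` Ls"] Mb_Ls by blast

lemma coprime_dvd2: assumes "2 * int a dvd u" "2 * int b dvd u" shows "2 * int a * int b dvd u"
proof -
  obtain w where w: "u = 2 * w" using assms(1) by (metis dvd_mult_left dvd_def)
  have "int a dvd w" "int b dvd w" using assms w by simp_all
  moreover have "coprime (int a) (int b)" using cop by simp
  ultimately have "int a * int b dvd w" by (simp add: divides_mult)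
  then show ?thesis using w by simp
qed

lemma Sig_h1: "(h, 1) \<in> Sig \<longleftrightarrow> h \<in> Hs"
proof
  assume "(h, 1) \<in> Sig"
  then obtain u v e where 1: "h = Dq n u e" "1 = Dq n v e" "2 * int b dvd u + v - en n e" "2 * int a dvd u - v - en n e"
    unfolding SigS_def by blast
  have "Dq n v e = Dq n 0 False" using 1(2) by (simp add: Dq_def Wq_0)
  then have e: "\<not> e" and v: "2 * int n dvd v" by (simp_all add: Dq_eq[OF n0])
  obtain k where k: "v = 2 * int n * k" using v by blast
  have "2 * int b dvd u"
    by (rule lin[OF 1(3) 1(3) b2n, where r=1 and s=0 and t="- k"]) (simp add: e en_def k)
  moreover have "2 * int a dvd u"
    by (rule lin[OF 1(4) 1(4) a2n, where r=1 and s=0 and t="k"]) (simp add: e en_def k)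
  ultimately have "2 * int a * int b dvd u" using coprime_dvd2 by blast
  then obtain j where "u = 2 * int a * int b * j" by blast
  then show "h \<in> Hs" using 1(1) e unfolding HsS_def by (auto simp: Dq_False)
next
  assume "h \<in> Hs"
  then obtain k where k: "h = Wq n (2 * int a * int b * k)" unfolding HsS_def by blast
  have "(Dq n (2 * int a * int b * k) False, Dq n 0 False) \<in> Sig"
    by (rule SigI) (auto simp: en_def)
  then show "(h, 1) \<in> Sig" using k by (simp add: Dq_False Wq_0)
qed

lemma Sig_1h: "(1, h) \<in> Sig \<longleftrightarrow> h \<in> Hs"
  using Sig_h1 Sig_swap by blast

lemma dg_Gs: "qdiag p q \<in> Gs \<longleftrightarrow> (p, q) \<in> Sig"
proof
  assume "qdiag p q \<in> Gs"
  then obtain p2 q2 where "(p2, q2) \<in> Sig" "qdiag p q = qdiag p2 q2 \<or> qdiag p q = ad p2 q2"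
    unfolding GsS_def by auto
  then show "(p, q) \<in> Sig" using Sig_nz by (auto simp: qdiag_def ad_def mat2_eq)
qed (rule GsI1)

lemma ad_Gs: "ad p q \<in> Gs \<longleftrightarrow> (p, q) \<in> Sig"
proof
  assume "ad p q \<in> Gs"
  then obtain p2 q2 where "(p2, q2) \<in> Sig" "ad p q = qdiag p2 q2 \<or> ad p q = ad p2 q2"
    unfolding GsS_def by auto
  then show "(p, q) \<in> Sig" using Sig_nz by (auto simp: qdiag_def ad_def mat2_eq)
qed (rule GsI2)

lemma HL_eq: "HL Ls = Hs"
  unfolding HL_def M_eq using dg_Gs Sig_h1 by auto

end


lemma qgen_pow: "g \<in> qgen S \<Longrightarrow> s \<in> S \<Longrightarrow> g * s ^ m \<in> qgen S"
proof (induction m arbitrary: g)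
  case 0 then show ?case by simp
next
  case (Suc m)
  have "g * s \<in> qgen S" using Suc.prems qgen.mul by blast
  from Suc.IH[OF this Suc.prems(2)] show ?case by (simp add: mult.assoc)
qed

lemma Wq_pow: "Wq n c ^ j = Wq n (int j * c)"
  by (induction j) (simp_all add: Wq_0 Wq_mult algebra_simps)

context ctx begin

lemma ab_dvd: "a * b dvd n" using adv bdv cop by (simp add: divides_mult)

lemma nm: obtains m where "n = a * b * m" "m > 0" "n div (a * b) = m"
proof -
  obtain m where m: "n = a * b * m" using ab_dvd by blast
  then have "m > 0" using n0 by (cases m) auto
  moreover have "n div (a * b) = m" using m a0 b0 by simp
  ultimately show ?thesis using that m by blast
qed

lemma Hs_period: assumes "n = a * b * m" "m > 0"
  shows "Wq n (2 * int a * int b * k) = Wq n (2 * int a * int b * (k mod int m))"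
proof -
  have "k - k mod int m = int m * (k div int m)" by (simp add: minus_mod_eq_mult_div)
  then have "2 * int a * int b * k - 2 * int a * int b * (k mod int m) = 2 * int a * int b * (int m * (k div int m))"
    by (metis right_diff_distrib)
  also have "\<dots> = 2 * int n * (k div int m)" using assms by (simp add: algebra_simps)
  finally show ?thesis by (simp add: Wq_eq[OF n0])
qed

lemma omega_2ab: "omega n ^ (2 * a * b) = Wq n (2 * int a * int b)"
  by (simp add: omega_pow)

lemma Hs_qgen: "Hs = qgen {omega n ^ (2 * a * b)}"
proof
  obtain m where m: "n = a * b * m" "m > 0" by (rule nm)
  show "Hs \<subseteq> qgen {omega n ^ (2 * a * b)}"
  proof
    fix h assume "h \<in> Hs"
    then obtain k where k: "h = Wq n (2 * int a * int b * k)" unfolding HsS_def by blast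
    define j where "j = nat (k mod int m)"
    have "h = Wq n (2 * int a * int b * int j)" using k Hs_period[OF m] m(2) by (simp add: j_def)
    also have "\<dots> = 1 * (omega n ^ (2 * a * b)) ^ j"
      by (simp add: omega_pow Wq_pow algebra_simps)
    finally show "h \<in> qgen {omega n ^ (2 * a * b)}" using qgen_pow[OF qgen.one] by simp
  qed
next
  show "qgen {omega n ^ (2 * a * b)} \<subseteq> Hs"
  proof
    fix h assume "h \<in> qgen {omega n ^ (2 * a * b)}"
    then show "h \<in> Hs"
    proof induction
      case one
      have "Wq n (2 * int a * int b * 0) \<in> Hs" unfolding HsS_def by blast
      then show ?case by (simp add: Wq_0)
    next
      case (mul x s)
      then obtain k where "x = Wq n (2 * int a * int b * k)" unfolding HsS_def by blast
      then have "x * s = Wq n (2 * int a * int b * (k + 1))" using mul by (simp add: omega_pow Wq_mult algebra_simps)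
      then show ?case unfolding HsS_def by blast
    next
      case (mulinv x s)
      then obtain k where "x = Wq n (2 * int a * int b * k)" unfolding HsS_def by blast
      then have "x * inverse s = Wq n (2 * int a * int b * (k - 1))" using mulinv by (simp add: omega_pow Wq_mult Wq_inv algebra_simps)
      then show ?case unfolding HsS_def by blast
    qed
  qed
qed

lemma Cyc_eq: "Cyc n (n div (a * b)) = Hs"
proof -
  obtain m where m: "n = a * b * m" "m > 0" "n div (a * b) = m" by (rule nm)
  have "2 * n div m = 2 * a * b" using m by simp
  then show ?thesis unfolding Cyc_def m(3) Hs_qgen by simp
qed

lemma Hs_img: assumes "n = a * b * m" "m > 0"
  shows "Hs = (\<lambda>k. Wq n (2 * int a * int b * k)) ` {0..<int m}"
proof
  show "Hs \<subseteq> (\<lambda>k. Wq n (2 * int a * int b * k)) ` {0..<int m}"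
  proof
    fix h assume "h \<in> Hs"
    then obtain k where k: "h = Wq n (2 * int a * int b * k)" unfolding HsS_def by blast
    then have "h = Wq n (2 * int a * int b * (k mod int m))" using Hs_period[OF assms] by simp
    moreover have "k mod int m \<in> {0..<int m}" using assms(2) by simp
    ultimately show "h \<in> (\<lambda>k. Wq n (2 * int a * int b * k)) ` {0..<int m}" by blast
  qed
qed (auto simp: HsS_def)

lemma Hs_inj: assumes "n = a * b * m" "m > 0"
  shows "inj_on (\<lambda>k. Wq n (2 * int a * int b * k)) {0..<int m}"
proof
  fix k l assume kl: "k \<in> {0..<int m}" "l \<in> {0..<int m}" "Wq n (2 * int a * int b * k) = Wq n (2 * int a * int b * l)"
  then have "2 * int n dvd 2 * int a * int b * k - 2 * int a * int b * l" by (simp add: Wq_eq[OF n0])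
  then have "(2 * int a * int b) * int m dvd (2 * int a * int b) * (k - l)"
    using assms by (simp add: algebra_simps)
  then have "int m dvd k - l" using a0 b0 by (subst (asm) dvd_mult_cancel_left) auto
  then have "k mod int m = l mod int m" by (simp add: mod_eq_dvd_iff)
  then show "k = l" using kl by simp
qed

lemma Hs_card: "card Hs = n div (a * b)" and Hs_fin: "finite Hs"
proof -
  obtain m where m: "n = a * b * m" "m > 0" "n div (a * b) = m" by (rule nm)
  show "card Hs = n div (a * b)"
    unfolding Hs_img[OF m(1,2)] m(3) by (simp add: card_image[OF Hs_inj[OF m(1,2)]])
  show "finite Hs" unfolding Hs_img[OF m(1,2)] by simp
qed

lemma one_Hs: "1 \<in> Hs"
proof -
  have "Wq n (2 * int a * int b * 0) \<in> Hs" unfolding HsS_def by blast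
  then show ?thesis by (simp add: Wq_0)
qed

lemma Hs_Ls: "Hs \<subseteq> Ls"
proof
  fix h assume "h \<in> Hs"
  then obtain k where k: "h = Wq n (2 * int a * int b * k)" unfolding HsS_def by blast
  have "h = Dq n ((2 * int b * k) * int a) False" using k by (simp add: Dq_False algebra_simps)
  then show "h \<in> Ls" using LsI1 by simp
qed

lemma LsHs: "{x * h | x h. x \<in> Ls \<and> h \<in> Hs} = Ls"
proof
  show "Ls \<subseteq> {x * h | x h. x \<in> Ls \<and> h \<in> Hs}" using one_Hs by force
  show "{x * h | x h. x \<in> Ls \<and> h \<in> Hs} \<subseteq> Ls"
  proof clarify
    fix x h assume x: "x \<in> Ls" and "h \<in> Hs"
    then obtain j where j: "h = Dq n (2 * int a * int b * j) False" unfolding HsS_def by (auto simp: Dq_False)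
    from x show "x * h \<in> Ls"
    proof (cases rule: LsE)
      case (1 k)
      have "x * h = Dq n ((k + 2 * int b * j) * int a) False"
        unfolding 1 j by (simp add: Dq_mult[OF n0] algebra_simps)
      then show ?thesis using LsI1 by simp
    next
      case (2 k)
      have "x * h = Dq n ((k - 2 * int a * j) * int b) True"
        unfolding 2 j by (simp add: Dq_mult[OF n0] algebra_simps)
      then show ?thesis using LsI2 by simp
    qed
  qed
qed

lemma Dic_sub: "Dic n \<subseteq> {Dq n s e | s e. True}"
proof
  fix x assume "x \<in> Dic n"
  then show "x \<in> {Dq n s e | s e. True}" unfolding Dic_def
  proof induction
    case one
    have "1 = Dq n 0 False" by (simp add: Dq_False Wq_0)
    then show ?case by blast
  next
    case (mul x s)
    then obtain t e where x: "x = Dq n t e" by blast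
    have om: "omega n = Dq n 1 False" using omega_pow[of n 1] by (simp add: Dq_False)
    have jj: "qJ = Dq n 0 True" by (simp add: Dq_def Wq_0)
    from mul(2) have "s = Dq n 1 False \<or> s = Dq n 0 True" using om jj by auto
    then have "x * s = Dq n (if e then t - 1 else t + 1) e \<or> x * s = Dq n (if e then t + int n else t) (\<not> e)"
      using x by (cases e) (auto simp: Dq_mult[OF n0])
    then show ?case by blast
  next
    case (mulinv x s)
    then obtain t e where x: "x = Dq n t e" by blast
    have om: "omega n = Dq n 1 False" using omega_pow[of n 1] by (simp add: Dq_False)
    have jj: "qJ = Dq n 0 True" by (simp add: Dq_def Wq_0)
    from mulinv(2) have "s = Dq n 1 False \<or> s = Dq n 0 True" using om jj by auto
    then have "x * inverse s = Dq n (if e then t + 1 else t - 1) e \<or> x * inverse s = Dq n (if e then t else t + int n) (\<not> e)"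
      using x by (cases e) (auto simp: Dq_mult[OF n0] Dq_inv[OF n0])
    then show ?case by blast
  qed
qed

lemma DqT: "Dq n s True * Dq n c False * inverse (Dq n s True) = Dq n (- c) False"
  by (simp add: Dq_mult[OF n0] Dq_inv[OF n0])
lemma DqF: "Dq n s False * Dq n c False * inverse (Dq n s False) = Dq n c False"
  by (simp add: Dq_mult[OF n0] Dq_inv[OF n0])

lemma Hs_normal: assumes "k \<in> Dic n" "h \<in> Hs" shows "k * h * inverse k \<in> Hs"
proof -
  obtain s e where k: "k = Dq n s e" using assms(1) Dic_sub by blast
  obtain j where j: "h = Dq n (2 * int a * int b * j) False" using assms(2) unfolding HsS_def by (auto simp: Dq_False)
  have "k * h * inverse k = Dq n (2 * int a * int b * (if e then - j else j)) False"
    unfolding k j by (cases e) (simp_all add: DqT DqF)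
  then have "k * h * inverse k = Wq n (2 * int a * int b * (if e then - j else j))" by (simp add: Dq_False)
  then show ?thesis unfolding HsS_def by blast
qed

lemma Sig_Mb: "(c, inverse c) \<in> Sig \<longleftrightarrow> c \<in> Ls"
proof
  assume "(c, inverse c) \<in> Sig"
  then obtain u v e where 1: "c = Dq n u e" "inverse c = Dq n v e" "2 * int b dvd u + v - en n e" "2 * int a dvd u - v - en n e"
    unfolding SigS_def by blast
  have "2 * int n dvd (if e then u + int n else - u) - v"
    using 1(1,2) by (simp add: Dq_inv[OF n0] Dq_eq[OF n0])
  show "c \<in> Ls"
  proof (cases e)
    case True
    then have "2 * int n dvd u + int n - v" using \<open>2 * int n dvd _\<close> by simp
    then have "2 * int b dvd u + int n - v" using b2n dvd_trans by blast
    then have "2 * int b dvd 2 * u"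
      by (rule lin[OF 1(3) _ b2n, where r=1 and s=1 and t=0]) (simp_all add: True en_def)
    then have "int b dvd u" by simp
    then obtain k where "u = int b * k" by blast
    then have "c = Dq n (k * int b) True" using 1(1) True by (simp add: mult.commute)
    then show ?thesis using LsI2 by simp
  next
    case False
    then have "2 * int n dvd - u - v" using \<open>2 * int n dvd _\<close> by simp
    then have "2 * int a dvd - u - v" using a2n dvd_trans by blast
    then have "2 * int a dvd 2 * u"
      by (rule lin[OF 1(4) _ a2n, where r=1 and s="-1" and t=0]) (simp_all add: False en_def)
    then have "int a dvd u" by simp
    then obtain k where "u = int a * k" by blast
    then have "c = Dq n (k * int a) False" using 1(1) False by (simp add: mult.commute)
    then show ?thesis using LsI1 by simp
  qed
next
  assume "c \<in> Ls"
  then show "(c, inverse c) \<in> Sig" using Mb_Ls ad_Gs by (simp add: Mb_ad)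
qed

lemma Ggrp_eq: "Ggrp Ls Hs = Gs"
proof
  have "(\<lambda>h. qdiag h 1) ` Hs \<union> (\<lambda>h. qdiag 1 h) ` Hs \<union> Mb ` Ls \<subseteq> Gs"
    using Sig_h1 Sig_1h Mb_Ls GsI1 by auto
  then show "Ggrp Ls Hs \<subseteq> Gs" unfolding Ggrp_def by (rule mgen_Gs)
  have "M \<subseteq> Ggrp Ls Hs" unfolding Ggrp_def by (rule mgen_mono) auto
  then show "Gs \<subseteq> Ggrp Ls Hs" using M_eq by simp
qed

lemma canon: "canonical Ls Hs"
  unfolding canonical_def Ggrp_eq using Sig_Mb ad_Gs by (auto simp: Mb_ad)

end


lemma qrank_dg: "qrank (mat2 \<alpha> 0 0 \<beta>) = 1 \<longleftrightarrow> (\<alpha> \<noteq> 0 \<or> \<beta> \<noteq> 0) \<and> (\<alpha> = 0 \<or> \<beta> = 0)"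
proof (cases "\<alpha> = 0 \<and> \<beta> = 0")
  case True then show ?thesis by (simp add: qrank_def mat2_zero)
next
  case False
  have "(\<exists>v :: quat ^ 2. v \<noteq> 0 \<and> mat2 \<alpha> 0 0 \<beta> *v v = 0) \<longleftrightarrow> (\<alpha> = 0 \<or> \<beta> = 0)"
  proof
    assume "\<exists>v :: quat ^ 2. v \<noteq> 0 \<and> mat2 \<alpha> 0 0 \<beta> *v v = 0"
    then obtain v :: "quat^2" where "v \<noteq> 0" "mat2 \<alpha> 0 0 \<beta> *v v = 0" by blast
    then show "\<alpha> = 0 \<or> \<beta> = 0" by (auto simp: mat2_mulv vec2_zero)
  next
    assume h: "\<alpha> = 0 \<or> \<beta> = 0"
    show "\<exists>v :: quat ^ 2. v \<noteq> 0 \<and> mat2 \<alpha> 0 0 \<beta> *v v = 0"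
    proof (cases "\<alpha> = 0")
      case True
      then show ?thesis by (intro exI[of _ "vector [1, 0]"]) (simp add: mat2_mulv vec2_zero)
    next
      case False
      then show ?thesis using h by (intro exI[of _ "vector [0, 1]"]) (simp add: mat2_mulv vec2_zero)
    qed
  qed
  then show ?thesis using False by (auto simp: qrank_def mat2_zero)
qed

lemma qrank_ad: "qrank (mat2 (- 1) p q (- 1)) = 1 \<longleftrightarrow> q * p = 1"
proof -
  have "(\<exists>v :: quat ^ 2. v \<noteq> 0 \<and> mat2 (- 1) p q (- 1) *v v = 0) \<longleftrightarrow> q * p = 1"
  proof
    assume "\<exists>v :: quat ^ 2. v \<noteq> 0 \<and> mat2 (- 1) p q (- 1) *v v = 0"
    then obtain v :: "quat^2" where v: "v \<noteq> 0" "mat2 (- 1) p q (- 1) *v v = 0" by blast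
    then have 1: "v$1 = p * v$2" and 2: "v$2 = q * v$1" by (auto simp: mat2_mulv vec2_zero)
    then have "(q * p - 1) * v$2 = 0" by (simp add: algebra_simps mult.assoc)
    moreover have "v$2 \<noteq> 0" using v(1) 1 by (auto simp: vec2_zero)
    ultimately show "q * p = 1" by simp
  next
    assume "q * p = 1"
    then show "\<exists>v :: quat ^ 2. v \<noteq> 0 \<and> mat2 (- 1) p q (- 1) *v v = 0"
      by (intro exI[of _ "vector [p, 1]"]) (simp add: mat2_mulv vec2_zero)
  qed
  moreover have "mat2 (- 1) p q (- 1) \<noteq> 0" by (simp add: mat2_zero)
  ultimately show ?thesis by (auto simp: qrank_def)
qed

context ctx begin

lemma Sig_unit: assumes "(p, q) \<in> Sig" shows "qcnj p * p = 1" "p * qcnj p = 1" "qcnj q * q = 1" "q * qcnj q = 1"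
  using Sig_cnj[OF assms] Sig_nz[OF assms] by simp_all

lemma Gs_unitary: assumes "g \<in> Gs" shows "unitary g"
proof -
  from assms obtain p q where g: "(p, q) \<in> Sig" "g = qdiag p q \<or> g = ad p q"
    unfolding GsS_def by auto
  have m1: "mat 1 = qdiag 1 1" by (simp add: mat1_eq qdiag_def)
  show ?thesis using g(2) Sig_unit[OF g(1)] unfolding unitary_def m1
    by (auto simp: dg_adj ad_adj dg_mult ad_ad)
qed

lemma refl_dg: assumes "(p, q) \<in> Sig"
  shows "is_reflection (qdiag p q) \<longleftrightarrow> (p \<noteq> 1 \<or> q \<noteq> 1) \<and> (p = 1 \<or> q = 1)"
proof -
  have "qdiag p q - mat 1 = mat2 (p - 1) 0 0 (q - 1)" by (simp add: qdiag_def mat1_eq mat2_minus)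
  moreover have "qdiag p q \<noteq> mat 1 \<longleftrightarrow> (p \<noteq> 1 \<or> q \<noteq> 1)" by (simp add: qdiag_def mat1_eq mat2_eq)
  ultimately show ?thesis unfolding is_reflection_def using Gs_unitary[OF GsI1[OF assms]]
      qrank_dg[of "p - 1" "q - 1"] by auto
qed

lemma refl_ad: assumes "(p, q) \<in> Sig"
  shows "is_reflection (ad p q) \<longleftrightarrow> q * p = 1"
proof -
  have "ad p q - mat 1 = mat2 (- 1) p q (- 1)" by (simp add: ad_def mat1_eq mat2_minus)
  moreover have "ad p q \<noteq> mat 1" by (simp add: ad_def mat1_eq mat2_eq)
  ultimately show ?thesis unfolding is_reflection_def using Gs_unitary[OF GsI2[OF assms]]
      qrank_ad[of p q] by auto
qed

lemma Ls_nz: "c \<in> Ls \<Longrightarrow> c \<noteq> 0"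
  by (auto elim: LsE simp: Dq_nz)

lemma Refl_eq: "{g \<in> Gs. is_reflection g} =
   (\<lambda>h. qdiag h 1) ` (Hs - {1}) \<union> (\<lambda>h. qdiag 1 h) ` (Hs - {1}) \<union> Mb ` Ls"
proof
  show "{g \<in> Gs. is_reflection g} \<subseteq> (\<lambda>h. qdiag h 1) ` (Hs - {1}) \<union> (\<lambda>h. qdiag 1 h) ` (Hs - {1}) \<union> Mb ` Ls"
  proof clarify
    fix g assume g: "g \<in> Gs" "is_reflection g" "g \<notin> Mb ` Ls" "g \<notin> (\<lambda>h. qdiag 1 h) ` (Hs - {1})"
    from g(1) obtain p q where pq: "(p, q) \<in> Sig" "g = qdiag p q \<or> g = ad p q"
      unfolding GsS_def by auto
    show "g \<in> (\<lambda>h. qdiag h 1) ` (Hs - {1})"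
    proof (cases "g = ad p q")
      case True
      then have "q * p = 1" using refl_ad[OF pq(1)] g(2) by simp
      then have "q = inverse p" using Sig_nz(1)[OF pq(1)]
        by (metis inverse_unique mult.assoc mult_1_left mult_1_right right_inverse)
      then have "p \<in> Ls" "g = Mb p" using Sig_Mb pq(1) True by (auto simp: Mb_ad)
      then show ?thesis using g(3) by blast
    next
      case False
      then have g2: "g = qdiag p q" using pq(2) by simp
      then have r: "(p \<noteq> 1 \<or> q \<noteq> 1) \<and> (p = 1 \<or> q = 1)" using refl_dg[OF pq(1)] g(2) by simp
      show ?thesis
      proof (cases "p = 1")
        case True
        then have "q \<in> Hs - {1}" using pq(1) r Sig_1h by auto
        then show ?thesis using g(4) g2 True by blast
      next
        case False
        then have "q = 1" "p \<in> Hs - {1}" using pq(1) r Sig_h1 by auto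
        then show ?thesis using g2 by blast
      qed
    qed
  qed
next
  have "qdiag h 1 \<in> Gs \<and> is_reflection (qdiag h 1)" if "h \<in> Hs - {1}" for h
    using that Sig_h1 GsI1 refl_dg by auto
  moreover have "qdiag 1 h \<in> Gs \<and> is_reflection (qdiag 1 h)" if "h \<in> Hs - {1}" for h
    using that Sig_1h GsI1 refl_dg by auto
  moreover have "Mb c \<in> Gs \<and> is_reflection (Mb c)" if "c \<in> Ls" for c
    using that Sig_Mb GsI2 refl_ad Ls_nz by (auto simp: Mb_ad)
  ultimately show "(\<lambda>h. qdiag h 1) ` (Hs - {1}) \<union> (\<lambda>h. qdiag 1 h) ` (Hs - {1}) \<union> Mb ` Ls \<subseteq> {g \<in> Gs. is_reflection g}"
    by blast
qed

end


context ctx begin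

definition sig :: "nat \<Rightarrow> nat \<Rightarrow> int \<times> int \<times> bool \<Rightarrow> quat \<times> quat" where
  "sig A B = (\<lambda>(x, y, e). (Dq n (x * int a + y * int b + en n e) e, Dq n (y * int b - x * int a) e))"

lemma Sig_img: assumes A: "n = a * A" "A > 0" and B: "n = b * B" "B > 0"
  shows "Sig = sig A B ` ({0..<int A} \<times> {0..<2 * int B} \<times> UNIV)"
proof
  have nAi: "int a * int A = int n" unfolding A(1) by simp
  have nBi: "int b * int B = int n" unfolding B(1) by simp
  show "Sig \<subseteq> sig A B ` ({0..<int A} \<times> {0..<2 * int B} \<times> UNIV)"
  proof
    fix pq assume "pq \<in> Sig"
    then obtain p q where pq: "pq = (p, q)" "(p, q) \<in> Sig" by (cases pq) auto
    obtain x y e where p: "p = Dq n (x * int a + y * int b + en n e) e" "q = Dq n (y * int b - x * int a) e"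
      using Sig_param[OF pq(2)] by blast
    define qq where "qq = x div int A"
    define x' where "x' = x mod int A"
    define r where "r = (y - qq * int B) div (2 * int B)"
    define y' where "y' = (y - qq * int B) mod (2 * int B)"
    have hx: "x = x' + qq * int A" unfolding x'_def qq_def by simp
    have hy: "y = y' + qq * int B + r * (2 * int B)" unfolding y'_def r_def
      using mod_div_mult_eq[of "y - qq * int B" "2 * int B"] by linarith
    have "(x * int a + y * int b) - (x' * int a + y' * int b) = qq * (int a * int A) + qq * (int b * int B) + 2 * r * (int b * int B)"
      by (simp add: hx hy algebra_simps)
    also have "\<dots> = 2 * int n * (qq + r)" unfolding nAi nBi by (simp add: algebra_simps)
    finally have d1: "2 * int n dvd (x * int a + y * int b + en n e) - (x' * int a + y' * int b + en n e)" by simp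
    have "(y * int b - x * int a) - (y' * int b - x' * int a) = 2 * r * (int b * int B)"
      using nAi nBi by (simp add: hx hy algebra_simps)
    also have "\<dots> = 2 * int n * r" unfolding nBi by simp
    finally have d2: "2 * int n dvd (y * int b - x * int a) - (y' * int b - x' * int a)" by simp
    have "pq = sig A B (x', y', e)" unfolding pq p sig_def using d1 d2 by (simp add: Dq_eq[OF n0])
    moreover have "(x', y', e) \<in> {0..<int A} \<times> {0..<2 * int B} \<times> UNIV"
      unfolding x'_def y'_def using A(2) B(2) by simp
    ultimately show "pq \<in> sig A B ` ({0..<int A} \<times> {0..<2 * int B} \<times> UNIV)" by blast
  qed
  show "sig A B ` ({0..<int A} \<times> {0..<2 * int B} \<times> UNIV) \<subseteq> Sig"
  proof -
    have "sig A B z \<in> Sig" for z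
    proof -
      obtain x y e where z: "z = (x, y, e)" by (cases z) auto
      have "(Dq n (x * int a + y * int b + en n e) e, Dq n (y * int b - x * int a) e) \<in> Sig"
        by (rule SigI) (simp_all add: algebra_simps)
      then show ?thesis unfolding z sig_def by simp
    qed
    then show ?thesis by auto
  qed
qed

lemma sig_inj: assumes A: "n = a * A" "A > 0" and B: "n = b * B" "B > 0"
  shows "inj_on (sig A B) ({0..<int A} \<times> {0..<2 * int B} \<times> UNIV)"
proof (rule inj_onI)
  have nAi: "int n = int a * int A" unfolding A(1) by simp
  have nBi: "int n = int b * int B" unfolding B(1) by simp
  fix z1 z2 assume z: "z1 \<in> {0..<int A} \<times> {0..<2 * int B} \<times> UNIV" "z2 \<in> {0..<int A} \<times> {0..<2 * int B} \<times> UNIV"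
    "sig A B z1 = sig A B z2"
  obtain x y e where z1: "z1 = (x, y, e)" by (cases z1) auto
  obtain x2 y2 e2 where z2: "z2 = (x2, y2, e2)" by (cases z2) auto
  have x: "x \<in> {0..<int A}" "y \<in> {0..<2 * int B}" "x2 \<in> {0..<int A}" "y2 \<in> {0..<2 * int B}"
    using z z1 z2 by auto
  have eq: "sig A B (x, y, e) = sig A B (x2, y2, e2)" using z z1 z2 by simp
  from eq have e: "e2 = e" unfolding sig_def by (simp add: Dq_eq[OF n0])
  from eq have d1: "2 * int n dvd (x * int a + y * int b + en n e) - (x2 * int a + y2 * int b + en n e)"
    unfolding sig_def e by (simp add: Dq_eq[OF n0])
  then have d1: "2 * int n dvd (x * int a + y * int b) - (x2 * int a + y2 * int b)" by simp
  from eq have d2: "2 * int n dvd (y * int b - x * int a) - (y2 * int b - x2 * int a)"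
    unfolding sig_def e by (simp add: Dq_eq[OF n0])
  have s1: "2 * int n dvd 2 * int b * (y - y2)"
    using dvd_add[OF d1 d2] e by (simp add: algebra_simps)
  have s2: "2 * int n dvd 2 * int a * (x - x2)"
    using dvd_diff[OF d1 d2] e by (simp add: algebra_simps)
  have "(2 * int a) * int A dvd (2 * int a) * (x - x2)" using s2 nAi by (simp add: algebra_simps)
  then have "int A dvd x - x2" using a0 by (subst (asm) dvd_mult_cancel_left) auto
  then have "x mod int A = x2 mod int A" by (simp add: mod_eq_dvd_iff)
  then have xx: "x = x2" using x by simp
  then have "2 * int n dvd y * int b - y2 * int b" using d1 e by simp
  then have "(int b) * (2 * int B) dvd (int b) * (y - y2)" using nBi by (simp add: algebra_simps)
  then have "2 * int B dvd y - y2" using b0 by (subst (asm) dvd_mult_cancel_left) auto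
  then have "y mod (2 * int B) = y2 mod (2 * int B)" by (simp add: mod_eq_dvd_iff)
  then have "y = y2" using x by simp
  then show "z1 = z2" using xx e z1 z2 by simp
qed

lemma Sig_card: assumes A: "n = a * A" "A > 0" and B: "n = b * B" "B > 0"
  shows "card Sig = 4 * A * B" "finite Sig"
proof -
  have "card Sig = card ({0..<int A} \<times> {0..<2 * int B} \<times> (UNIV :: bool set))"
    unfolding Sig_img[OF assms] by (rule card_image[OF sig_inj[OF assms]])
  also have "\<dots> = 4 * A * B"
  proof -
    have e2: "nat (2 * int B) = 2 * B" by arith
    show ?thesis unfolding card_cartesian_product card_atLeastLessThan_int by (simp add: e2)
  qed
  finally show "card Sig = 4 * A * B" .
  show "finite Sig" unfolding Sig_img[OF assms] by simp
qed

lemma Gs_card: assumes A: "n = a * A" "A > 0" and B: "n = b * B" "B > 0"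
  shows "card Gs = 8 * A * B" "finite Gs"
proof -
  have i1: "inj_on (\<lambda>(p, q). qdiag p q) Sig" by (auto intro!: inj_onI simp: qdiag_def mat2_eq)
  have i2: "inj_on (\<lambda>(p, q). ad p q) Sig" by (auto intro!: inj_onI simp: ad_def mat2_eq)
  have dj: "(\<lambda>(p, q). qdiag p q) ` Sig \<inter> (\<lambda>(p, q). ad p q) ` Sig = {}"
    using Sig_nz by (fastforce simp: qdiag_def ad_def mat2_eq)
  have f: "finite Sig" using Sig_card[OF assms] by simp
  show "finite Gs" unfolding GsS_def using f by simp
  have "card Gs = card ((\<lambda>(p, q). qdiag p q) ` Sig) + card ((\<lambda>(p, q). ad p q) ` Sig)"
    unfolding GsS_def using f dj by (simp add: card_Un_disjoint)
  also have "\<dots> = 8 * A * B" using card_image[OF i1] card_image[OF i2] Sig_card[OF assms] by simp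
  finally show "card Gs = 8 * A * B" .
qed

lemma Ls_img: assumes A: "n = a * A" "A > 0" and B: "n = b * B" "B > 0"
  shows "Ls = (\<lambda>k. Dq n (k * int a) False) ` {0..<2 * int A} \<union> (\<lambda>k. Dq n (k * int b) True) ` {0..<2 * int B}"
proof
  show "Ls \<subseteq> (\<lambda>k. Dq n (k * int a) False) ` {0..<2 * int A} \<union> (\<lambda>k. Dq n (k * int b) True) ` {0..<2 * int B}"
  proof
    fix x assume "x \<in> Ls"
    then show "x \<in> (\<lambda>k. Dq n (k * int a) False) ` {0..<2 * int A} \<union> (\<lambda>k. Dq n (k * int b) True) ` {0..<2 * int B}"
    proof (cases rule: LsE)
      case (1 k)
      then have "x = Dq n ((k mod (2 * int A)) * int a) False" using Dq_period[OF A(1)] by simp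
      moreover have "k mod (2 * int A) \<in> {0..<2 * int A}" using A(2) by simp
      ultimately show ?thesis by blast
    next
      case (2 k)
      then have "x = Dq n ((k mod (2 * int B)) * int b) True" using Dq_period[OF B(1)] by simp
      moreover have "k mod (2 * int B) \<in> {0..<2 * int B}" using B(2) by simp
      ultimately show ?thesis by blast
    qed
  qed
qed (auto intro: LsI1 LsI2)

lemma inj_mod: assumes "c > 0" "n = c * C" "C > 0"
  shows "inj_on (\<lambda>k. Dq n (k * int c) e) {0..<2 * int C}"
proof
  fix k l assume kl: "k \<in> {0..<2 * int C}" "l \<in> {0..<2 * int C}" "Dq n (k * int c) e = Dq n (l * int c) e"
  then have "2 * int n dvd k * int c - l * int c" by (simp add: Dq_eq[OF n0])
  then have "int c * (2 * int C) dvd int c * (k - l)" using assms by (simp add: algebra_simps)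
  then have "2 * int C dvd k - l" using assms by (subst (asm) dvd_mult_cancel_left) auto
  then have "k mod (2 * int C) = l mod (2 * int C)" by (simp add: mod_eq_dvd_iff)
  then show "k = l" using kl by simp
qed

lemma Ls_card: assumes A: "n = a * A" "A > 0" and B: "n = b * B" "B > 0"
  shows "card Ls = 2 * A + 2 * B" "finite Ls"
proof -
  have dj: "(\<lambda>k. Dq n (k * int a) False) ` {0..<2 * int A} \<inter> (\<lambda>k. Dq n (k * int b) True) ` {0..<2 * int B} = {}"
    by (auto simp: Dq_eq[OF n0])
  show "finite Ls" unfolding Ls_img[OF assms] by simp
  show "card Ls = 2 * A + 2 * B"
    unfolding Ls_img[OF assms] using dj
    by (simp add: card_Un_disjoint card_image[OF inj_mod[OF a0 A]] card_image[OF inj_mod[OF b0 B]])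
qed

lemma Refl_card: assumes A: "n = a * A" "A > 0" and B: "n = b * B" "B > 0"
  shows "card {g \<in> Gs. is_reflection g} = 2 * (n div (a * b) - 1) + 2 * A + 2 * B"
proof -
  have i1: "inj_on (\<lambda>h. qdiag h 1) (Hs - {1})" by (auto intro!: inj_onI simp: qdiag_def mat2_eq)
  have i2: "inj_on (\<lambda>h. qdiag 1 h) (Hs - {1})" by (auto intro!: inj_onI simp: qdiag_def mat2_eq)
  have i3: "inj_on Mb Ls" by (auto intro!: inj_onI simp: Mb_def mat2_eq)
  have fH: "finite (Hs - {1})" using Hs_fin by simp
  have fL: "finite Ls" using Ls_card[OF assms] by simp
  have cH: "card (Hs - {1}) = n div (a * b) - 1" using Hs_card Hs_fin one_Hs by simp
  have d1: "(\<lambda>h. qdiag h 1) ` (Hs - {1}) \<inter> (\<lambda>h. qdiag 1 h) ` (Hs - {1}) = {}"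
    by (auto simp: qdiag_def mat2_eq)
  have d2: "((\<lambda>h. qdiag h 1) ` (Hs - {1}) \<union> (\<lambda>h. qdiag 1 h) ` (Hs - {1})) \<inter> Mb ` Ls = {}"
    by (auto simp: qdiag_def Mb_def mat2_eq)
  have "card {g \<in> Gs. is_reflection g} = card ((\<lambda>h. qdiag h 1) ` (Hs - {1})) + card ((\<lambda>h. qdiag 1 h) ` (Hs - {1})) + card (Mb ` Ls)"
    unfolding Refl_eq using fH fL d1 d2 by (simp add: card_Un_disjoint)
  also have "\<dots> = 2 * (n div (a * b) - 1) + 2 * A + 2 * B"
    using card_image[OF i1] card_image[OF i2] card_image[OF i3] cH Ls_card[OF assms] by simp
  finally show ?thesis .
qed

lemma Sig_a: "(Wq n (int a), Wq n (- int a)) \<in> Sig"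
proof -
  have "(Dq n (int a) False, Dq n (- int a) False) \<in> Sig" by (rule SigI) (simp_all add: en_def)
  then show ?thesis by (simp add: Dq_False)
qed

lemma Sig_b: "(Wq n (int b), Wq n (int b)) \<in> Sig"
proof -
  have "(Dq n (int b) False, Dq n (int b) False) \<in> Sig" by (rule SigI) (simp_all add: en_def)
  then show ?thesis by (simp add: Dq_False)
qed

lemma Sig_a_dvd: assumes "(Wq n c, Wq n (- c)) \<in> Sig" shows "int a dvd c"
proof -
  obtain u v e where 1: "Wq n c = Dq n u e" "Wq n (- c) = Dq n v e" "2 * int b dvd u + v - en n e" "2 * int a dvd u - v - en n e"
    using assms unfolding SigS_def by blast
  from 1(1,2) have e: "\<not> e" and "2 * int n dvd c - u" "2 * int n dvd - c - v"
    by (simp_all flip: Dq_False add: Dq_eq[OF n0])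
  then obtain k1 k2 where k: "c - u = 2 * int n * k1" "- c - v = 2 * int n * k2" by (meson dvdE)
  have "2 * int a dvd 2 * c"
    by (rule lin[OF 1(4) 1(4) a2n, where r=1 and s=0 and t="k1 - k2"]) (use k e in \<open>simp add: en_def algebra_simps\<close>)
  then show ?thesis by simp
qed

lemma Sig_b_dvd: assumes "(Wq n c, Wq n c) \<in> Sig" shows "int b dvd c"
proof -
  obtain u v e where 1: "Wq n c = Dq n u e" "Wq n c = Dq n v e" "2 * int b dvd u + v - en n e" "2 * int a dvd u - v - en n e"
    using assms unfolding SigS_def by blast
  from 1(1,2) have e: "\<not> e" and "2 * int n dvd c - u" "2 * int n dvd c - v"
    by (simp_all flip: Dq_False add: Dq_eq[OF n0])
  then obtain k1 k2 where k: "c - u = 2 * int n * k1" "c - v = 2 * int n * k2" by (meson dvdE)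
  have "2 * int b dvd 2 * c"
    by (rule lin[OF 1(3) 1(3) b2n, where r=1 and s=0 and t="k1 + k2"]) (use k e in \<open>simp add: en_def algebra_simps\<close>)
  then show ?thesis by simp
qed

end

lemma Gs_inj: assumes "ctx n a b" "ctx n a2 b2" "GsS n a b = GsS n a2 b2" shows "a = a2 \<and> b = b2"
proof -
  interpret X: ctx n a b by fact
  interpret Y: ctx n a2 b2 by fact
  have "(Wq n (int a), Wq n (- int a)) \<in> SigS n a2 b2"
    using X.Sig_a X.GsI1 assms(3) Y.dg_Gs by metis
  then have 1: "int a2 dvd int a" by (rule Y.Sig_a_dvd)
  have "(Wq n (int a2), Wq n (- int a2)) \<in> SigS n a b"
    using Y.Sig_a Y.GsI1 assms(3) X.dg_Gs by metis
  then have 2: "int a dvd int a2" by (rule X.Sig_a_dvd)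
  have "(Wq n (int b), Wq n (int b)) \<in> SigS n a2 b2"
    using X.Sig_b X.GsI1 assms(3) Y.dg_Gs by metis
  then have 3: "int b2 dvd int b" by (rule Y.Sig_b_dvd)
  have "(Wq n (int b2), Wq n (int b2)) \<in> SigS n a b"
    using Y.Sig_b Y.GsI1 assms(3) X.dg_Gs by metis
  then have 4: "int b dvd int b2" by (rule X.Sig_b_dvd)
  show ?thesis using 1 2 3 4 by (simp add: dvd_antisym)
qed



lemma ctx_Omega: assumes "n \<ge> 2" "(a, b) \<in> Omega n" shows "ctx n a b"
  using assms unfolding Omega_def by unfold_locales auto

context ctx begin

lemma base_eq: "base_group (Lsys n a b) = Gs"
  unfolding base_group_def Lsys_eq HL_eq Ggrp_eq ..

lemma main_part:
  shows "HL (Lsys n a b) = qgen {omega n ^ (2 * a * b)}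
          \<and> HL (Lsys n a b) = Cyc n (n div (a * b))
          \<and> card (HL (Lsys n a b)) = n div (a * b)
          \<and> HL (Lsys n a b) \<subseteq> Lsys n a b
          \<and> {x * h | x h. x \<in> Lsys n a b \<and> h \<in> HL (Lsys n a b)} = Lsys n a b
          \<and> (\<forall>k \<in> Dic n. \<forall>h \<in> HL (Lsys n a b). k * h * inverse k \<in> HL (Lsys n a b))
          \<and> canonical (Lsys n a b) (HL (Lsys n a b))
          \<and> base_group (Lsys n a b) = Ggrp (Lsys n a b) (Cyc n (n div (a * b)))
          \<and> finite (base_group (Lsys n a b))
          \<and> real (card (base_group (Lsys n a b))) = 8 * real n ^ 2 / real (a * b)
          \<and> real (card {g \<in> base_group (Lsys n a b). is_reflection g})
              = 2 * real n / real (a * b) + 2 * real n / real a + 2 * real n / real b - 2"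
proof -
  obtain A where A: "n = a * A" "A > 0" by (rule nA)
  obtain B where B: "n = b * B" "B > 0" by (rule nB)
  obtain m where m: "n = a * b * m" "m > 0" "n div (a * b) = m" by (rule nm)
  have r1: "real n / real (a * b) = real m" using m a0 b0 by simp
  have r2: "real n / real a = real A" using A a0 by simp
  have r3: "real n / real b = real B" using B b0 by simp
  have r4: "8 * real n ^ 2 / real (a * b) = 8 * real A * real B"
  proof -
    have "real n ^ 2 = real (a * b) * (real A * real B)"
      using A(1) B(1) by (metis of_nat_mult power2_eq_square mult.assoc mult.left_commute)
    then show ?thesis using a0 b0 by simp
  qed
  have c1: "real (card {g \<in> Gs. is_reflection g}) = 2 * real m + 2 * real A + 2 * real B - 2"
    using Refl_card[OF A B] m by (simp add: of_nat_diff)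
  have BG: "base_group Ls = Gs" using base_eq Lsys_eq by simp
  have cG: "real (card Gs) = 8 * real n ^ 2 / real (a * b)" using Gs_card(1)[OF A B] r4 by simp
  have cR: "real (card {g \<in> Gs. is_reflection g}) = 2 * real n / real (a * b) + 2 * real n / real a + 2 * real n / real b - 2"
    using c1 r1 r2 r3 by simp
  show ?thesis
    unfolding Lsys_eq HL_eq BG Cyc_eq
    apply (intro conjI)
    subgoal by (rule Hs_qgen)
    subgoal by (rule refl)
    subgoal by (rule Hs_card)
    subgoal by (rule Hs_Ls)
    subgoal by (rule LsHs)
    subgoal using Hs_normal by blast
    subgoal by (rule canon)
    subgoal by (rule Ggrp_eq[symmetric])
    subgoal by (rule Gs_card(2)[OF A B])
    subgoal by (rule cG)
    subgoal by (rule cR)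
    done
qed

end

theorem theorem5p3:
  fixes n :: nat
  assumes "n \<ge> 2"
  shows "(\<forall>(a, b) \<in> Omega n.
            HL (Lsys n a b) = qgen {omega n ^ (2 * a * b)}
          \<and> HL (Lsys n a b) = Cyc n (n div (a * b))
          \<and> card (HL (Lsys n a b)) = n div (a * b)
          \<and> HL (Lsys n a b) \<subseteq> Lsys n a b
          \<and> {x * h | x h. x \<in> Lsys n a b \<and> h \<in> HL (Lsys n a b)} = Lsys n a b
          \<and> (\<forall>k \<in> Dic n. \<forall>h \<in> HL (Lsys n a b). k * h * inverse k \<in> HL (Lsys n a b))
          \<and> canonical (Lsys n a b) (HL (Lsys n a b))
          \<and> base_group (Lsys n a b) = Ggrp (Lsys n a b) (Cyc n (n div (a * b)))
          \<and> finite (base_group (Lsys n a b))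
          \<and> real (card (base_group (Lsys n a b))) = 8 * real n ^ 2 / real (a * b)
          \<and> real (card {g \<in> base_group (Lsys n a b). is_reflection g})
              = 2 * real n / real (a * b) + 2 * real n / real a + 2 * real n / real b - 2)
        \<and> inj_on (\<lambda>(a, b). base_group (Lsys n a b)) (Omega n)"
proof
  show "\<forall>(a, b) \<in> Omega n.
            HL (Lsys n a b) = qgen {omega n ^ (2 * a * b)}
          \<and> HL (Lsys n a b) = Cyc n (n div (a * b))
          \<and> card (HL (Lsys n a b)) = n div (a * b)
          \<and> HL (Lsys n a b) \<subseteq> Lsys n a b
          \<and> {x * h | x h. x \<in> Lsys n a b \<and> h \<in> HL (Lsys n a b)} = Lsys n a b
          \<and> (\<forall>k \<in> Dic n. \<forall>h \<in> HL (Lsys n a b). k * h * inverse k \<in> HL (Lsys n a b))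
          \<and> canonical (Lsys n a b) (HL (Lsys n a b))
          \<and> base_group (Lsys n a b) = Ggrp (Lsys n a b) (Cyc n (n div (a * b)))
          \<and> finite (base_group (Lsys n a b))
          \<and> real (card (base_group (Lsys n a b))) = 8 * real n ^ 2 / real (a * b)
          \<and> real (card {g \<in> base_group (Lsys n a b). is_reflection g})
              = 2 * real n / real (a * b) + 2 * real n / real a + 2 * real n / real b - 2"
    using ctx.main_part[OF ctx_Omega[OF assms]] by blast
  show "inj_on (\<lambda>(a, b). base_group (Lsys n a b)) (Omega n)"
  proof (rule inj_onI, clarify)
    fix a b a2 b2 assume ab: "(a, b) \<in> Omega n" "(a2, b2) \<in> Omega n"
      and eq: "base_group (Lsys n a b) = base_group (Lsys n a2 b2)"
    have c1: "ctx n a b" and c2: "ctx n a2 b2" using ctx_Omega[OF assms] ab by auto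
    have "GsS n a b = GsS n a2 b2" using eq ctx.base_eq[OF c1] ctx.base_eq[OF c2] by simp
    then show "a = a2 \<and> b = b2" using Gs_inj[OF c1 c2] by simp
  qed
qed


end
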